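(* Let $n\ge 3$ be an integer, let $R=\mathbb{C}[x,y,z,w]$, and let $I_n\subseteq R$ be the ideal generated by $$(x^n-y^n)(z^n-w^n)xy,\ (x^n-y^n)(z^n-w^n)zw,\ (x^n-z^n)(y^n-w^n)xz,\ (x^n-z^n)(y^n-w^n)yw,\ (x^n-w^n)(y^n-z^n)xw,\ (x^n-w^n)(y^n-z^n)yz.$$ Then $4n+2\le \alpha(I_n^{(2)})\le 4n+4$.
   Context: For a homogeneous ideal $I$, $\alpha(I)$ denotes the least degree of a nonzero homogeneous element of $I$. The $m$-th symbolic power is $I^{(m)}=\bigcap_{\mathfrak p\in \operatorname{Ass}(R/I)} (I^mR_{\mathfrak p}\cap R)$. *)

theory Defs
  imports Complex_Main "HOL-Library.Poly_Mapping" "HOL-Library.Numeral_Type"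
begin

definition is_ideal :: "'a::comm_ring_1 set \<Rightarrow> bool" where
  "is_ideal I \<longleftrightarrow> 0 \<in> I \<and> (\<forall>a\<in>I. \<forall>b\<in>I. a + b \<in> I) \<and> (\<forall>r. \<forall>a\<in>I. r * a \<in> I)"

definition ideal_gen :: "'a::comm_ring_1 set \<Rightarrow> 'a set" where
  "ideal_gen S = \<Inter>{I. is_ideal I \<and> S \<subseteq> I}"

definition ideal_pow :: "'a::comm_ring_1 set \<Rightarrow> nat \<Rightarrow> 'a set" where
  "ideal_pow I m = ideal_gen {prod_list xs | xs. length xs = m \<and> set xs \<subseteq> I}"

definition prime_ideal :: "'a::comm_ring_1 set \<Rightarrow> bool" where
  "prime_ideal P \<longleftrightarrow> is_ideal P \<and> 1 \<notin> P \<and> (\<forall>a b. a * b \<in> P \<longrightarrow> a \<in> P \<or> b \<in> P)"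

definition ass_primes :: "'a::comm_ring_1 set \<Rightarrow> 'a set set" where
  "ass_primes I = {P. prime_ideal P \<and> (\<exists>g. P = {r. r * g \<in> I})}"

text \<open>Symbolic power: intersection over associated primes P of the contraction
  I^m R_P \<inter> R = {f. \<exists>s \<notin> P. s f \<in> I^m}.\<close>
definition symbolic_power :: "'a::comm_ring_1 set \<Rightarrow> nat \<Rightarrow> 'a set" where
  "symbolic_power I m = {f. \<forall>P \<in> ass_primes I. \<exists>s. s \<notin> P \<and> s * f \<in> ideal_pow I m}"

text \<open>Polynomial ring C[x,y,z,w]: variables indexed by the 4-element type.\<close>
type_synonym mpoly4 = "(4 \<Rightarrow>\<^sub>0 nat) \<Rightarrow>\<^sub>0 complex"

definition Var :: "4 \<Rightarrow> mpoly4" where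
  "Var i = Poly_Mapping.single (Poly_Mapping.single i 1) 1"

definition homogeneous :: "nat \<Rightarrow> mpoly4 \<Rightarrow> bool" where
  "homogeneous d f \<longleftrightarrow> (\<forall>a \<in> Poly_Mapping.keys f. (\<Sum>i\<in>UNIV. Poly_Mapping.lookup a i) = d)"

definition alpha :: "mpoly4 set \<Rightarrow> nat" where
  "alpha I = (LEAST d. \<exists>f \<in> I. f \<noteq> 0 \<and> homogeneous d f)"

end

theory Submission
  imports Defs "HOL-Computational_Algebra.Polynomial"
begin

definition C :: "complex \<Rightarrow> mpoly4" where "C c = Poly_Mapping.single 0 c"

definition mon :: "(4 \<Rightarrow> 'b::comm_ring_1) \<Rightarrow> (4 \<Rightarrow>\<^sub>0 nat) \<Rightarrow> 'b" where
  "mon \<sigma> m = (\<Prod>i\<in>UNIV. \<sigma> i ^ Poly_Mapping.lookup m i)"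

definition ev :: "(complex \<Rightarrow> 'b::comm_ring_1) \<Rightarrow> (4 \<Rightarrow> 'b) \<Rightarrow> mpoly4 \<Rightarrow> 'b" where
  "ev \<kappa> \<sigma> f = (\<Sum>m\<in>Poly_Mapping.keys f. \<kappa> (Poly_Mapping.lookup f m) * mon \<sigma> m)"

definition chom :: "(complex \<Rightarrow> 'b::comm_ring_1) \<Rightarrow> bool" where
  "chom \<kappa> \<longleftrightarrow> (\<forall>a b. \<kappa> (a + b) = \<kappa> a + \<kappa> b) \<and> (\<forall>a b. \<kappa> (a * b) = \<kappa> a * \<kappa> b) \<and> \<kappa> 1 = 1"

lemma chom_0: "chom \<kappa> \<Longrightarrow> \<kappa> 0 = 0"
  unfolding chom_def by (metis add_cancel_right_right add_0)

lemma chom_add: "chom \<kappa> \<Longrightarrow> \<kappa> (a + b) = \<kappa> a + \<kappa> b"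
  unfolding chom_def by blast

lemma chom_mult: "chom \<kappa> \<Longrightarrow> \<kappa> (a * b) = \<kappa> a * \<kappa> b"
  unfolding chom_def by blast

lemma chom_1: "chom \<kappa> \<Longrightarrow> \<kappa> 1 = 1"
  unfolding chom_def by blast

lemma ev_superset:
  assumes "chom \<kappa>" "finite S" "Poly_Mapping.keys f \<subseteq> S"
  shows "ev \<kappa> \<sigma> f = (\<Sum>m\<in>S. \<kappa> (Poly_Mapping.lookup f m) * mon \<sigma> m)"
  unfolding ev_def
proof (rule sum.mono_neutral_left)
  show "finite S" by (rule assms(2))
  show "Poly_Mapping.keys f \<subseteq> S" by (rule assms(3))
  show "\<forall>i\<in>S - Poly_Mapping.keys f. \<kappa> (Poly_Mapping.lookup f i) * mon \<sigma> i = 0"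
    using chom_0[OF assms(1)] by (simp add: in_keys_iff)
qed

lemma ev_add:
  assumes "chom \<kappa>"
  shows "ev \<kappa> \<sigma> (f + g) = ev \<kappa> \<sigma> f + ev \<kappa> \<sigma> g"
proof -
  define S where "S = Poly_Mapping.keys f \<union> Poly_Mapping.keys g"
  have fin: "finite S" by (simp add: S_def)
  have k: "Poly_Mapping.keys (f + g) \<subseteq> S" using keys_add[of f g] by (simp add: S_def)
  have kf: "Poly_Mapping.keys f \<subseteq> S" and kg: "Poly_Mapping.keys g \<subseteq> S" by (auto simp: S_def)
  have "ev \<kappa> \<sigma> (f + g) = (\<Sum>m\<in>S. \<kappa> (Poly_Mapping.lookup (f+g) m) * mon \<sigma> m)"
    by (rule ev_superset[OF assms fin k])
  also have "\<dots> = (\<Sum>m\<in>S. \<kappa> (Poly_Mapping.lookup f m) * mon \<sigma> m + \<kappa> (Poly_Mapping.lookup g m) * mon \<sigma> m)"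
    by (rule sum.cong) (simp_all only: lookup_add chom_add[OF assms] distrib_right)
  also have "\<dots> = (\<Sum>m\<in>S. \<kappa> (Poly_Mapping.lookup f m) * mon \<sigma> m) + (\<Sum>m\<in>S. \<kappa> (Poly_Mapping.lookup g m) * mon \<sigma> m)"
    by (rule sum.distrib)
  also have "\<dots> = ev \<kappa> \<sigma> f + ev \<kappa> \<sigma> g"
    using ev_superset[OF assms fin kf] ev_superset[OF assms fin kg] by simp
  finally show ?thesis .
qed

lemma ev_zero [simp]: "ev \<kappa> \<sigma> 0 = 0"
  by (simp add: ev_def)

lemma ev_sum:
  assumes "chom \<kappa>"
  shows "ev \<kappa> \<sigma> (sum F A) = (\<Sum>a\<in>A. ev \<kappa> \<sigma> (F a))"
  by (induction A rule: infinite_finite_induct) (simp_all add: ev_add[OF assms])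

lemma ev_single:
  assumes "chom \<kappa>"
  shows "ev \<kappa> \<sigma> (Poly_Mapping.single m c) = \<kappa> c * mon \<sigma> m"
proof (cases "c = 0")
  case True then show ?thesis by (simp add: chom_0[OF assms])
next
  case False then show ?thesis by (simp add: ev_def)
qed

lemma mon_add: "mon \<sigma> (m + m') = mon \<sigma> m * mon \<sigma> m'"
  by (simp add: mon_def lookup_add power_add prod.distrib)

lemma mon_zero [simp]: "mon \<sigma> 0 = 1"
  by (simp add: mon_def)

lemma pm_expand: "f = (\<Sum>m\<in>Poly_Mapping.keys f. Poly_Mapping.single m (Poly_Mapping.lookup f m))"
proof (rule poly_mapping_eqI)
  fix k
  show "Poly_Mapping.lookup f k = Poly_Mapping.lookup (\<Sum>m\<in>Poly_Mapping.keys f. Poly_Mapping.single m (Poly_Mapping.lookup f m)) k"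
    by (auto simp: lookup_sum lookup_single when_def in_keys_iff)
qed

lemma ev_mult:
  assumes "chom \<kappa>"
  shows "ev \<kappa> \<sigma> (f * g) = ev \<kappa> \<sigma> f * ev \<kappa> \<sigma> g"
proof -
  have "f * g = (\<Sum>m\<in>Poly_Mapping.keys f. Poly_Mapping.single m (Poly_Mapping.lookup f m)) *
                (\<Sum>m\<in>Poly_Mapping.keys g. Poly_Mapping.single m (Poly_Mapping.lookup g m))"
    using pm_expand[of f] pm_expand[of g] by simp
  also have "\<dots> = (\<Sum>m\<in>Poly_Mapping.keys f. \<Sum>m'\<in>Poly_Mapping.keys g.
      Poly_Mapping.single (m + m') (Poly_Mapping.lookup f m * Poly_Mapping.lookup g m'))"
    by (simp add: sum_product mult_single)
  finally have "ev \<kappa> \<sigma> (f * g) = (\<Sum>m\<in>Poly_Mapping.keys f. \<Sum>m'\<in>Poly_Mapping.keys g.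
      \<kappa> (Poly_Mapping.lookup f m) * mon \<sigma> m * (\<kappa> (Poly_Mapping.lookup g m') * mon \<sigma> m'))"
    by (simp add: ev_sum[OF assms] ev_single[OF assms] chom_mult[OF assms] mon_add mult_ac)
  also have "\<dots> = ev \<kappa> \<sigma> f * ev \<kappa> \<sigma> g"
    by (simp add: ev_def sum_product)
  finally show ?thesis .
qed

lemma ev_1 [simp]: "chom \<kappa> \<Longrightarrow> ev \<kappa> \<sigma> 1 = 1"
  using ev_single[of \<kappa> \<sigma> 0 1] by (simp add: chom_1)

lemma ev_C [simp]: "chom \<kappa> \<Longrightarrow> ev \<kappa> \<sigma> (C c) = \<kappa> c"
  by (simp add: C_def ev_single)

lemma ev_Var [simp]: "chom \<kappa> \<Longrightarrow> ev \<kappa> \<sigma> (Var i) = \<sigma> i"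
proof -
  assume a: "chom \<kappa>"
  have "mon \<sigma> (Poly_Mapping.single i 1) = (\<Prod>j\<in>UNIV. if i = j then \<sigma> j else 1)"
    unfolding mon_def by (rule prod.cong) (auto simp: lookup_single when_def)
  also have "\<dots> = \<sigma> i" by simp
  finally show ?thesis using a by (simp add: Var_def ev_single chom_1)
qed

lemma ev_uminus: "chom \<kappa> \<Longrightarrow> ev \<kappa> \<sigma> (- f) = - ev \<kappa> \<sigma> f"
  by (metis add_eq_0_iff2 ev_add ev_zero add.right_inverse)

lemma ev_diff: "chom \<kappa> \<Longrightarrow> ev \<kappa> \<sigma> (f - g) = ev \<kappa> \<sigma> f - ev \<kappa> \<sigma> g"
  by (simp add: ev_add ev_uminus diff_conv_add_uminus del: add_uminus_conv_diff)

lemma ev_power: "chom \<kappa> \<Longrightarrow> ev \<kappa> \<sigma> (f ^ k) = ev \<kappa> \<sigma> f ^ k"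
  by (induction k) (simp_all add: ev_mult)

lemma chom_C: "chom C"
  unfolding chom_def C_def by (simp add: single_add mult_single)

lemma C_add: "C (a + b) = C a + C b" by (simp add: C_def single_add)
lemma C_mult: "C (a * b) = C a * C b" by (simp add: C_def mult_single)
lemma C_1 [simp]: "C 1 = 1" by (simp add: C_def)
lemma C_0 [simp]: "C 0 = 0" by (simp add: C_def)
lemma C_pow: "C (a ^ k) = C a ^ k" by (induction k) (simp_all add: C_mult)


lemma Var_pow: "Var i ^ e = Poly_Mapping.single (Poly_Mapping.single i e) 1"
proof (induction e)
  case 0 then show ?case by simp
next
  case (Suc e)
  have "Var i ^ Suc e = Var i * Var i ^ e" by simp
  also have "\<dots> = Poly_Mapping.single (Poly_Mapping.single i 1 + Poly_Mapping.single i e) 1"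
    unfolding Suc.IH by (simp add: Var_def mult_single)
  also have "Poly_Mapping.single i 1 + Poly_Mapping.single i e = Poly_Mapping.single i (Suc e)"
    by (simp add: single_add[symmetric])
  finally show ?case .
qed

lemma prod_single: "finite A \<Longrightarrow>
  (\<Prod>i\<in>A. Poly_Mapping.single (g i) (1::complex)) = Poly_Mapping.single (\<Sum>i\<in>A. g i :: 4 \<Rightarrow>\<^sub>0 nat) 1"
  by (induction A rule: finite_induct) (simp_all add: mult_single)

lemma sum_single_lookup: "(\<Sum>i\<in>UNIV. Poly_Mapping.single i (Poly_Mapping.lookup m i)) = (m :: 4 \<Rightarrow>\<^sub>0 nat)"
  by (rule poly_mapping_eqI) (simp add: lookup_sum lookup_single when_def)

lemma single_as_mon: "Poly_Mapping.single m c = C c * mon Var m"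
proof -
  have "mon Var m = (\<Prod>i\<in>UNIV. Poly_Mapping.single (Poly_Mapping.single i (Poly_Mapping.lookup m i)) 1 :: mpoly4)"
    by (simp add: mon_def Var_pow)
  also have "\<dots> = Poly_Mapping.single m 1" by (simp add: prod_single sum_single_lookup)
  finally show ?thesis by (simp add: C_def mult_single)
qed

lemma poly_induct:
  assumes C: "\<And>c. P (C c)" and V: "\<And>i. P (Var i)"
    and A: "\<And>a b. P a \<Longrightarrow> P b \<Longrightarrow> P (a + b)" and M: "\<And>a b. P a \<Longrightarrow> P b \<Longrightarrow> P (a * b)"
  shows "P f"
proof -
  have P1: "P 1" using C[of 1] by simp
  have P0: "P 0" using C[of 0] by simp
  have pow: "P (a ^ k)" if "P a" for a k using that by (induction k) (simp_all add: P1 M)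
  have pr: "P (\<Prod>i\<in>A. g i)" if "finite A" "\<And>i. P (g i)" for A :: "4 set" and g
    using that by (induction A rule: finite_induct) (simp_all add: P1 M)
  have sm: "P (\<Sum>i\<in>A. g i)" if "finite A" "\<And>i. i \<in> A \<Longrightarrow> P (g i)" for A :: "(4\<Rightarrow>\<^sub>0nat) set" and g
    using that by (induction A rule: finite_induct) (simp_all add: P0 A)
  have "f = (\<Sum>m\<in>Poly_Mapping.keys f. C (Poly_Mapping.lookup f m) * mon Var m)"
    using pm_expand[of f] by (simp add: single_as_mon)
  also have "P \<dots>"
    by (rule sm) (auto intro!: M C pr pow V simp: mon_def)
  finally show ?thesis .
qed

lemma ev_unique:
  assumes "chom \<kappa>"
    and "\<And>a b. h (a + b) = h a + h b" "\<And>a b. h (a * b) = h a * h b"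
    and "\<And>c. h (C c) = \<kappa> c" "\<And>i. h (Var i) = \<sigma> i"
  shows "h f = ev \<kappa> \<sigma> f"
  apply (rule poly_induct[where P="\<lambda>f. h f = ev \<kappa> \<sigma> f"])
  apply (simp_all add: assms ev_add ev_mult)
  done

lemma ev_ev:
  assumes "chom \<kappa>"
  shows "ev \<kappa> \<sigma> (ev C \<tau> f) = ev \<kappa> (\<lambda>i. ev \<kappa> \<sigma> (\<tau> i)) f"
  by (rule ev_unique) (simp_all add: assms chom_C ev_add ev_mult)

definition PC :: "complex \<Rightarrow> mpoly4 poly" where "PC c = [:C c:]"

lemma chom_PC: "chom PC"
  unfolding chom_def PC_def by (simp add: C_add C_mult)

lemma chom_id: "chom (\<lambda>c. c)"
  unfolding chom_def by simp

lemma chom_poly: "chom \<kappa> \<Longrightarrow> chom (\<lambda>c. poly (\<kappa> c) a)"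
  unfolding chom_def by simp

lemma poly_ev:
  assumes "chom \<kappa>"
  shows "poly (ev \<kappa> \<sigma> f) a = ev (\<lambda>c. poly (\<kappa> c) a) (\<lambda>i. poly (\<sigma> i) a) f"
  by (rule ev_unique) (simp_all add: assms chom_poly ev_add ev_mult)

lemma poly_PC [simp]: "poly (PC c) a = C c"
  by (simp add: PC_def)

lemma degree_PC [simp]: "degree (PC c) = 0"
  by (simp add: PC_def)

lemma degree_ev_le:
  assumes "\<And>i. degree (\<sigma> i) \<le> 1"
    and "\<And>m. m \<in> Poly_Mapping.keys f \<Longrightarrow> (\<Sum>i\<in>UNIV. Poly_Mapping.lookup m i) \<le> d"
  shows "degree (ev PC \<sigma> f) \<le> d"
  unfolding ev_def
proof (rule degree_sum_le)
  fix m assume m: "m \<in> Poly_Mapping.keys f"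
  have "degree (mon \<sigma> m) \<le> (\<Sum>i\<in>UNIV. degree (\<sigma> i ^ Poly_Mapping.lookup m i))"
    unfolding mon_def using degree_prod_sum_le[of UNIV "\<lambda>i. \<sigma> i ^ Poly_Mapping.lookup m i"] by (simp add: o_def)
  also have "\<dots> \<le> (\<Sum>i\<in>UNIV. Poly_Mapping.lookup m i)"
  proof (rule sum_mono)
    fix i
    have "degree (\<sigma> i ^ Poly_Mapping.lookup m i) \<le> degree (\<sigma> i) * Poly_Mapping.lookup m i"
      by (rule degree_power_le)
    also have "\<dots> \<le> Poly_Mapping.lookup m i" using assms(1)[of i] by simp
    finally show "degree (\<sigma> i ^ Poly_Mapping.lookup m i) \<le> Poly_Mapping.lookup m i" .
  qed
  also have "\<dots> \<le> d" by (rule assms(2)[OF m])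
  finally have "degree (mon \<sigma> m) \<le> d" .
  then show "degree (PC (Poly_Mapping.lookup f m) * mon \<sigma> m) \<le> d"
    using degree_mult_le[of "PC (Poly_Mapping.lookup f m)" "mon \<sigma> m"] by simp
qed simp


lemma ideal_gen_ideal: "is_ideal (ideal_gen S)"
  unfolding ideal_gen_def is_ideal_def by auto

lemma ideal_gen_sub: "S \<subseteq> ideal_gen S"
  unfolding ideal_gen_def by auto

lemma ideal_gen_least: "is_ideal J \<Longrightarrow> S \<subseteq> J \<Longrightarrow> ideal_gen S \<subseteq> J"
  unfolding ideal_gen_def by auto

lemma ideal_0: "is_ideal I \<Longrightarrow> 0 \<in> I"
  unfolding is_ideal_def by auto

lemma ideal_add: "is_ideal I \<Longrightarrow> a \<in> I \<Longrightarrow> b \<in> I \<Longrightarrow> a + b \<in> I"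
  unfolding is_ideal_def by auto

lemma ideal_multL: "is_ideal I \<Longrightarrow> a \<in> I \<Longrightarrow> r * a \<in> I"
  unfolding is_ideal_def by auto

lemma ideal_multR: "is_ideal I \<Longrightarrow> a \<in> I \<Longrightarrow> a * r \<in> I"
  unfolding is_ideal_def by (metis mult.commute)

lemma ideal_uminus: "is_ideal I \<Longrightarrow> a \<in> I \<Longrightarrow> - a \<in> I"
  using ideal_multL[of I a "-1"] by simp

lemma ideal_diff: "is_ideal I \<Longrightarrow> a \<in> I \<Longrightarrow> b \<in> I \<Longrightarrow> a - b \<in> I"
  using ideal_add[of I a "-b"] ideal_uminus[of I b] by simp

lemma ideal_colon: "is_ideal I \<Longrightarrow> is_ideal {r. r * g \<in> I}"
  unfolding is_ideal_def by (auto simp: distrib_right mult.assoc)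

lemma ideal_preimage:
  assumes "is_ideal J" "h 0 = 0" "\<And>a b. h (a + b) = h a + h b" "\<And>a b. h (a * b) = h a * h b"
  shows "is_ideal {r. h r \<in> J}"
  using assms unfolding is_ideal_def by auto

lemma ideal_ev_preimage:
  assumes "is_ideal J" "chom \<kappa>"
  shows "is_ideal {r. ev \<kappa> \<sigma> r \<in> J}"
  by (rule ideal_preimage) (simp_all add: assms ev_add ev_mult)

lemma ideal_gen_hom:
  assumes "is_ideal J" "chom \<kappa>" "\<And>G. G \<in> S \<Longrightarrow> ev \<kappa> \<sigma> G \<in> J" "p \<in> ideal_gen S"
  shows "ev \<kappa> \<sigma> p \<in> J"
proof -
  have "ideal_gen S \<subseteq> {r. ev \<kappa> \<sigma> r \<in> J}"
    by (rule ideal_gen_least) (use assms ideal_ev_preimage in auto)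
  then show ?thesis using assms(4) by auto
qed

lemma prod_list_two: "length xs = 2 \<Longrightarrow> \<exists>a b. xs = [a, b] \<and> prod_list xs = a * b"
  by (cases xs; cases "tl xs") auto

lemma ideal_pow2_hom:
  assumes "is_ideal J" "chom \<kappa>" "\<And>a. a \<in> I \<Longrightarrow> ev \<kappa> \<sigma> a \<in> K"
    and "\<And>a b. a \<in> K \<Longrightarrow> b \<in> K \<Longrightarrow> a * b \<in> J"
    and "p \<in> ideal_pow I 2"
  shows "ev \<kappa> \<sigma> p \<in> J"
proof -
  have p: "p \<in> ideal_gen {prod_list xs |xs. length xs = 2 \<and> set xs \<subseteq> I}"
    using assms(5) by (simp add: ideal_pow_def)
  have G: "ev \<kappa> \<sigma> G \<in> J" if Gin: "G \<in> {prod_list xs |xs. length xs = 2 \<and> set xs \<subseteq> I}" for G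
  proof -
    obtain xs where xs: "G = prod_list xs" "length xs = 2" "set xs \<subseteq> I" using Gin by blast
    obtain a b where ab: "xs = [a, b]" "prod_list xs = a * b" using prod_list_two[OF xs(2)] by blast
    have "a \<in> I" "b \<in> I" "G = a * b" using xs ab by auto
    then show ?thesis using assms(3,4) by (simp add: ev_mult[OF assms(2)])
  qed
  show ?thesis by (rule ideal_gen_hom[OF assms(1,2) G p])
qed

lemma mult_in_pow2: "a \<in> I \<Longrightarrow> b \<in> I \<Longrightarrow> a * b \<in> ideal_pow I 2"
  unfolding ideal_pow_def
  by (rule subsetD[OF ideal_gen_sub]) (auto intro!: exI[of _ "[a, b]"])

lemma ev_id: "ev C Var f = f"
  by (rule ev_unique[symmetric]) (simp_all add: chom_C)

definition gens :: "nat \<Rightarrow> mpoly4 set" where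
 "gens n = {(Var 0^n - Var 1^n) * (Var 2^n - Var 3^n) * Var 0 * Var 1,
            (Var 0^n - Var 1^n) * (Var 2^n - Var 3^n) * Var 2 * Var 3,
            (Var 0^n - Var 2^n) * (Var 1^n - Var 3^n) * Var 0 * Var 2,
            (Var 0^n - Var 2^n) * (Var 1^n - Var 3^n) * Var 1 * Var 3,
            (Var 0^n - Var 3^n) * (Var 1^n - Var 2^n) * Var 0 * Var 3,
            (Var 0^n - Var 3^n) * (Var 1^n - Var 2^n) * Var 1 * Var 2}"

lemma double_root:
  fixes r :: mpoly4
  assumes gz: "\<And>G. G \<in> gens n \<Longrightarrow> poly (ev PC \<sigma> G) r = 0"
    and sf: "s * f \<in> ideal_pow (ideal_gen (gens n)) 2"
    and s: "poly (ev PC \<sigma> s) r \<noteq> 0"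
    and f: "ev PC \<sigma> f \<noteq> 0"
  shows "2 \<le> order r (ev PC \<sigma> f)"
proof -
  let ?q = "[:-r, 1:]"
  have J1: "is_ideal {p. ?q dvd p}" unfolding is_ideal_def by (auto intro: dvd_add)
  have J2: "is_ideal {p. ?q ^ 2 dvd p}" unfolding is_ideal_def by (auto intro: dvd_add)
  have I1: "ev PC \<sigma> p \<in> {p. ?q dvd p}" if "p \<in> ideal_gen (gens n)" for p
    by (rule ideal_gen_hom[OF J1 chom_PC _ that]) (use gz in \<open>auto simp: poly_eq_0_iff_dvd\<close>)
  have K: "a * b \<in> {p. ?q ^ 2 dvd p}" if "a \<in> {p. ?q dvd p}" "b \<in> {p. ?q dvd p}" for a b
    using that by (metis mem_Collect_eq mult_dvd_mono power2_eq_square)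
  have "ev PC \<sigma> (s * f) \<in> {p. ?q ^ 2 dvd p}"
    by (rule ideal_pow2_hom[OF J2 chom_PC I1 K sf])
  then have d: "?q ^ 2 dvd ev PC \<sigma> s * ev PC \<sigma> f" by (simp add: ev_mult[OF chom_PC])
  have s0: "ev PC \<sigma> s \<noteq> 0" using s by auto
  then have nz: "ev PC \<sigma> s * ev PC \<sigma> f \<noteq> 0" using f by simp
  have "2 \<le> order r (ev PC \<sigma> s * ev PC \<sigma> f)" using d nz by (simp add: order_divides)
  also have "\<dots> = order r (ev PC \<sigma> s) + order r (ev PC \<sigma> f)" by (rule order_mult[OF nz])
  also have "order r (ev PC \<sigma> s) = 0" using s by (simp add: order_root)
  finally show ?thesis by simp
qed

lemma subdiff:
  assumes J: "is_ideal J" and V: "\<And>i. Var i - \<tau> i \<in> J"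
  shows "r - ev C \<tau> r \<in> J"
proof (rule poly_induct[where P="\<lambda>r. r - ev C \<tau> r \<in> J"])
  fix c show "C c - ev C \<tau> (C c) \<in> J" using ideal_0[OF J] by (simp add: chom_C)
next
  fix i show "Var i - ev C \<tau> (Var i) \<in> J" using V by (simp add: chom_C)
next
  fix a b assume a: "a - ev C \<tau> a \<in> J" and b: "b - ev C \<tau> b \<in> J"
  have "a + b - ev C \<tau> (a + b) = (a - ev C \<tau> a) + (b - ev C \<tau> b)"
    by (simp add: ev_add[OF chom_C])
  then show "a + b - ev C \<tau> (a + b) \<in> J" using ideal_add[OF J a b] by metis
  have "a * b - ev C \<tau> (a * b) = a * (b - ev C \<tau> b) + ev C \<tau> b * (a - ev C \<tau> a)"
    by (simp add: ev_mult[OF chom_C] algebra_simps)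
  then show "a * b - ev C \<tau> (a * b) \<in> J"
    using ideal_add[OF J ideal_multL[OF J b] ideal_multL[OF J a]] by metis
qed

lemma ass_line:
  assumes I: "I = ideal_gen (gens n)"
    and vars: "\<And>i. Var i - \<tau> i \<in> ideal_gen {la, lb}"
    and la: "la * g \<in> I" and lb: "lb * g \<in> I"
    and gz: "\<And>G. G \<in> gens n \<Longrightarrow> ev C \<tau> G = 0"
    and gnz: "ev C \<tau> g \<noteq> 0"
  shows "{r. r * g \<in> I} \<in> ass_primes I \<and> {r. r * g \<in> I} = {r. ev C \<tau> r = 0}"
proof -
  have II: "is_ideal I" using I ideal_gen_ideal by simp
  have kerI: "ev C \<tau> p = 0" if "p \<in> I" for p
    using ideal_gen_hom[where J="{0}" and \<kappa>=C and \<sigma>=\<tau> and S="gens n" and p=p] that I gz chom_C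
    by (auto simp: is_ideal_def)
  have "ideal_gen {la, lb} \<subseteq> {r. r * g \<in> I}"
    by (rule ideal_gen_least) (use ideal_colon[OF II] la lb in auto)
  have eq: "{r. r * g \<in> I} = {r. ev C \<tau> r = 0}"
  proof safe
    fix r assume "r * g \<in> I"
    then have "ev C \<tau> (r * g) = 0" using kerI by blast
    then have "ev C \<tau> r * ev C \<tau> g = 0" by (simp only: ev_mult[OF chom_C])
    then show "ev C \<tau> r = 0" using gnz by simp
  next
    fix r assume r0: "ev C \<tau> r = 0"
    have "r - ev C \<tau> r \<in> ideal_gen {la, lb}" by (rule subdiff[OF ideal_gen_ideal vars])
    then have "r \<in> ideal_gen {la, lb}" using r0 by simp
    then show "r * g \<in> I" using \<open>ideal_gen {la, lb} \<subseteq> {r. r * g \<in> I}\<close> by auto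
  qed
  have prime: "prime_ideal {r. ev C \<tau> r = 0}"
    unfolding prime_ideal_def
  proof (intro conjI allI impI)
    show "is_ideal {r. ev C \<tau> r = 0}"
      using ideal_ev_preimage[of "{0}" C \<tau>] chom_C by (simp add: is_ideal_def)
    show "1 \<notin> {r. ev C \<tau> r = 0}" by (simp add: chom_C)
  next
    fix a b assume "a * b \<in> {r. ev C \<tau> r = 0}"
    then show "a \<in> {r. ev C \<tau> r = 0} \<or> b \<in> {r. ev C \<tau> r = 0}"
      by (simp add: ev_mult[OF chom_C])
  qed
  show ?thesis unfolding ass_primes_def using eq prime by auto
qed

lemma root_order:
  assumes I: "I = ideal_gen (gens n)"
    and f: "f \<in> symbolic_power I 2"
    and P: "P \<in> ass_primes I" and Pker: "P = {r. ev C \<tau> r = 0}"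
    and gz: "\<And>G. G \<in> gens n \<Longrightarrow> ev C (\<lambda>i. poly (\<sigma> i) r) G = 0"
    and rho: "\<And>i. ev C \<rho> (poly (\<sigma> i) r) = \<tau> i"
    and fz: "ev PC \<sigma> f \<noteq> 0"
  shows "2 \<le> order r (ev PC \<sigma> f)"
proof -
  obtain s where s: "s \<notin> P" "s * f \<in> ideal_pow I 2"
    using f P unfolding symbolic_power_def by blast
  have pe: "poly (ev PC \<sigma> h) r = ev C (\<lambda>i. poly (\<sigma> i) r) h" for h
    using poly_ev[OF chom_PC, of \<sigma> h r] by (simp add: PC_def)
  have "ev C \<rho> (poly (ev PC \<sigma> s) r) = ev C \<tau> s"
    unfolding pe by (simp add: ev_ev[OF chom_C] rho)
  moreover have "ev C \<tau> s \<noteq> 0" using s(1) Pker by simp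
  ultimately have "poly (ev PC \<sigma> s) r \<noteq> 0" by auto
  then show ?thesis
    using double_root[of n \<sigma> r s f] gz s(2) fz I by (simp add: pe)
qed

lemma sym_transport:
  assumes I: "I = ideal_gen (gens n)"
    and inv: "\<And>h. ev C \<pi> (ev C \<pi> h) = h"
    and g1: "\<And>G. G \<in> gens n \<Longrightarrow> ev C \<pi> G \<in> I"
    and f: "f \<in> symbolic_power I 2"
  shows "ev C \<pi> f \<in> symbolic_power I 2"
proof -
  let ?h = "ev C \<pi>"
  have II: "is_ideal I" using I ideal_gen_ideal by simp
  have hI: "?h p \<in> I" if "p \<in> I" for p
    using ideal_gen_hom[OF II chom_C, where S="gens n" and \<sigma>=\<pi> and p=p] g1 that I by auto
  have hI2: "?h p \<in> ideal_pow I 2" if "p \<in> ideal_pow I 2" for p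
    by (rule ideal_pow2_hom[OF _ chom_C hI _ that])
       (simp_all add: ideal_pow_def ideal_gen_ideal mult_in_pow2[unfolded ideal_pow_def])
  show ?thesis
    unfolding symbolic_power_def
  proof safe
    fix P assume P: "P \<in> ass_primes I"
    then obtain g where Pp: "prime_ideal P" and Pg: "P = {r. r * g \<in> I}"
      unfolding ass_primes_def by blast
    define P' where "P' = {r. r * ?h g \<in> I}"
    have mem: "r \<in> P' \<longleftrightarrow> ?h r \<in> P" for r
    proof
      assume "r \<in> P'"
      then have "?h (r * ?h g) \<in> I" using hI by (simp add: P'_def)
      then show "?h r \<in> P" using Pg inv by (simp add: ev_mult[OF chom_C])
    next
      assume "?h r \<in> P"
      then have "?h (?h r * g) \<in> I" using hI Pg by simp
      then show "r \<in> P'" using inv by (simp add: P'_def ev_mult[OF chom_C])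
    qed
    have "prime_ideal P'"
      unfolding prime_ideal_def
    proof (intro conjI allI impI)
      show "is_ideal P'" unfolding P'_def by (rule ideal_colon[OF II])
      show "1 \<notin> P'" using mem[of 1] Pp by (simp add: chom_C prime_ideal_def)
    next
      fix a b assume "a * b \<in> P'"
      then have "?h a * ?h b \<in> P" using mem by (simp add: ev_mult[OF chom_C])
      then show "a \<in> P' \<or> b \<in> P'" using Pp mem by (auto simp: prime_ideal_def)
    qed
    then have "P' \<in> ass_primes I" unfolding ass_primes_def P'_def by blast
    then obtain s where s: "s \<notin> P'" "s * f \<in> ideal_pow I 2"
      using f unfolding symbolic_power_def by blast
    show "\<exists>s. s \<notin> P \<and> s * ?h f \<in> ideal_pow I 2"
    proof (intro exI conjI)
      show "?h s \<notin> P" using s(1) mem by simp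
      show "?h s * ?h f \<in> ideal_pow I 2" using hI2[OF s(2)] by (simp add: ev_mult[OF chom_C])
    qed
  qed
qed


lemma ex4:
  fixes x :: 4
  shows "x = 0 \<or> x = 1 \<or> x = 2 \<or> x = 3"
proof (induct x)
  case (of_int z)
  then have "z = 0 \<or> z = 1 \<or> z = 2 \<or> z = 3" by fastforce
  then show ?case by auto
qed

lemma C_eps_pow: "\<epsilon> ^ n = 1 \<Longrightarrow> (C \<epsilon> * p) ^ n = p ^ n"
  by (simp add: power_mult_distrib C_pow[symmetric])

lemma C_inv_mult: "\<eta> \<noteq> 0 \<Longrightarrow> C (inverse \<eta>) * (C \<eta> * p) = p"
  by (simp add: mult.assoc[symmetric] C_mult[symmetric])

lemma root_nz:
  fixes \<epsilon> :: complex
  assumes "\<epsilon> ^ n = 1" "n \<ge> 1" shows "\<epsilon> \<noteq> 0"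
proof
  assume "\<epsilon> = 0"
  then have "\<epsilon> ^ n = 0" using assms(2) by (cases n) simp_all
  then show False using assms(1) by simp
qed

definition geo :: "complex \<Rightarrow> 4 \<Rightarrow> 4 \<Rightarrow> nat \<Rightarrow> mpoly4" where
  "geo \<epsilon> a b n = (\<Sum>i<n. (C \<epsilon> * Var b) ^ (n - Suc i) * Var a ^ i)"

lemma geo_mult: "\<epsilon> ^ n = 1 \<Longrightarrow> (Var a - C \<epsilon> * Var b) * geo \<epsilon> a b n = Var a ^ n - Var b ^ n"
  using power_diff_sumr2[of "Var a" n "C \<epsilon> * Var b"] by (simp add: geo_def C_eps_pow)

lemma ev_geo:
  assumes "pt a = \<epsilon> * pt b"
  shows "ev (\<lambda>c. c) pt (geo \<epsilon> a b n) = of_nat n * (\<epsilon> * pt b) ^ (n - 1)"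
proof -
  have "ev (\<lambda>c. c) pt (geo \<epsilon> a b n) = (\<Sum>i<n. (\<epsilon> * pt b) ^ (n - Suc i) * (\<epsilon> * pt b) ^ i)"
    by (simp add: geo_def ev_sum[OF chom_id] ev_mult[OF chom_id] ev_power[OF chom_id] chom_id assms)
  also have "\<dots> = (\<Sum>i<n. (\<epsilon> * pt b) ^ (n - 1))"
    by (rule sum.cong) (auto simp: power_add[symmetric])
  finally show ?thesis by simp
qed

lemma gen_in: "G \<in> gens n \<Longrightarrow> G \<in> ideal_gen (gens n)"
  using ideal_gen_sub by blast

lemmas evC = ev_mult[OF chom_C] ev_diff[OF chom_C] ev_power[OF chom_C] ev_add[OF chom_C] ev_Var[OF chom_C] ev_C[OF chom_C] ev_uminus[OF chom_C]
lemmas evI = ev_mult[OF chom_id] ev_diff[OF chom_id] ev_power[OF chom_id] ev_add[OF chom_id] ev_Var[OF chom_id] ev_C[OF chom_id] ev_uminus[OF chom_id]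

lemma gen_memI: "h = G * W \<Longrightarrow> G \<in> gens n \<Longrightarrow> h \<in> ideal_gen (gens n)"
  using ideal_multR[OF ideal_gen_ideal gen_in] by blast

lemma gen_memI_neg: "h = - (G * W) \<Longrightarrow> G \<in> gens n \<Longrightarrow> h \<in> ideal_gen (gens n)"
  using ideal_uminus[OF ideal_gen_ideal ideal_multR[OF ideal_gen_ideal gen_in]] by blast

lemma in_ideal_gen2: "l1 \<in> ideal_gen {l1, l2}" "l2 \<in> ideal_gen {l1, l2}" "0 \<in> ideal_gen {l1, l2}"
  using ideal_gen_sub[of "{l1, l2}"] ideal_0[OF ideal_gen_ideal] by auto

lemma nz_by_eval: "ev (\<lambda>c. c) pt (ev C \<tau> g) \<noteq> 0 \<Longrightarrow> ev C \<tau> g \<noteq> 0"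
  by auto

lemma two_pow_ne1: "n \<ge> 1 \<Longrightarrow> (2::complex) ^ n \<noteq> 1"
proof -
  assume "n \<ge> 1"
  then have "(2::real) ^ n > 1" by (simp add: one_less_power)
  then have "complex_of_real (2 ^ n) \<noteq> 1" by (metis less_irrefl of_real_eq_1_iff)
  then show ?thesis by simp
qed

subsection \<open>Line A: x = y = 0\<close>

definition tauA :: "4 \<Rightarrow> mpoly4" where "tauA i = (if i = 0 \<or> i = 1 then 0 else Var i)"

definition gA :: "nat \<Rightarrow> mpoly4" where
  "gA n = (Var 0^n - Var 2^n) * (Var 1^n - Var 3^n) * Var 2 * Var 3"

lemma lineA:
  assumes n: "n \<ge> 1"
  shows "{r. r * gA n \<in> ideal_gen (gens n)} \<in> ass_primes (ideal_gen (gens n)) \<and>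
         {r. r * gA n \<in> ideal_gen (gens n)} = {r. ev C tauA r = 0}"
proof (rule ass_line[where la="Var 0" and lb="Var 1"])
  show "Var i - tauA i \<in> ideal_gen {Var 0, Var 1}" for i
    using ex4[of i] by (elim disjE) (simp_all add: tauA_def in_ideal_gen2)
  have "Var 0 * gA n = ((Var 0^n - Var 2^n) * (Var 1^n - Var 3^n) * Var 0 * Var 2) * Var 3"
    by (simp add: gA_def mult_ac)
  then show "Var 0 * gA n \<in> ideal_gen (gens n)"
    by (rule gen_memI) (simp add: gens_def)
  have "Var 1 * gA n = ((Var 0^n - Var 2^n) * (Var 1^n - Var 3^n) * Var 1 * Var 3) * Var 2"
    by (simp add: gA_def mult_ac)
  then show "Var 1 * gA n \<in> ideal_gen (gens n)"
    by (rule gen_memI) (simp add: gens_def)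
  show "ev C tauA G = 0" if "G \<in> gens n" for G
    using that n by (auto simp: gens_def evC tauA_def)
  define pt :: "4 \<Rightarrow> complex" where "pt = (\<lambda>i. 1)"
  show "ev C tauA (gA n) \<noteq> 0"
    apply (rule nz_by_eval[of pt])
    using n by (simp add: ev_ev[OF chom_id] gA_def evI evC tauA_def pt_def chom_id power_0_left)
qed simp


subsection \<open>Line B: x = eps y, w = eta y\<close>

definition tauB :: "complex \<Rightarrow> complex \<Rightarrow> 4 \<Rightarrow> mpoly4" where
  "tauB \<epsilon> \<eta> i = (if i = 0 then C \<epsilon> * Var 1 else if i = 3 then C \<eta> * Var 1 else Var i)"

definition gB :: "complex \<Rightarrow> complex \<Rightarrow> nat \<Rightarrow> mpoly4" where
  "gB \<epsilon> \<eta> n = geo \<epsilon> 0 1 n * geo \<eta> 3 1 n * (Var 2^n - Var 3^n) * (Var 0^n - Var 2^n) * Var 0 * Var 1 * Var 2"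

lemma lineB:
  assumes n: "n \<ge> 1" and e: "\<epsilon> ^ n = 1" and h: "\<eta> ^ n = 1"
  shows "{r. r * gB \<epsilon> \<eta> n \<in> ideal_gen (gens n)} \<in> ass_primes (ideal_gen (gens n)) \<and>
         {r. r * gB \<epsilon> \<eta> n \<in> ideal_gen (gens n)} = {r. ev C (tauB \<epsilon> \<eta>) r = 0}"
proof (rule ass_line[where la="Var 0 - C \<epsilon> * Var 1" and lb="Var 3 - C \<eta> * Var 1"])
  show "Var i - tauB \<epsilon> \<eta> i \<in> ideal_gen {Var 0 - C \<epsilon> * Var 1, Var 3 - C \<eta> * Var 1}" for i
    using ex4[of i] by (elim disjE) (simp_all add: tauB_def in_ideal_gen2)
  have "(Var 0 - C \<epsilon> * Var 1) * gB \<epsilon> \<eta> n = ((Var 0 - C \<epsilon> * Var 1) * geo \<epsilon> 0 1 n) *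
     (geo \<eta> 3 1 n * (Var 2^n - Var 3^n) * (Var 0^n - Var 2^n) * Var 0 * Var 1 * Var 2)"
    by (simp add: gB_def mult_ac)
  also have "\<dots> = ((Var 0^n - Var 1^n) * (Var 2^n - Var 3^n) * Var 0 * Var 1) *
      (geo \<eta> 3 1 n * (Var 0^n - Var 2^n) * Var 2)"
    unfolding geo_mult[OF e] by (simp add: mult_ac)
  finally show "(Var 0 - C \<epsilon> * Var 1) * gB \<epsilon> \<eta> n \<in> ideal_gen (gens n)"
    by (rule gen_memI) (simp add: gens_def)
  have "(Var 3 - C \<eta> * Var 1) * gB \<epsilon> \<eta> n = ((Var 3 - C \<eta> * Var 1) * geo \<eta> 3 1 n) *
     (geo \<epsilon> 0 1 n * (Var 2^n - Var 3^n) * (Var 0^n - Var 2^n) * Var 0 * Var 1 * Var 2)"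
    by (simp add: gB_def mult_ac)
  also have "\<dots> = - (((Var 0^n - Var 2^n) * (Var 1^n - Var 3^n) * Var 0 * Var 2) *
      (geo \<epsilon> 0 1 n * (Var 2^n - Var 3^n) * Var 1))"
    unfolding geo_mult[OF h] by (simp add: algebra_simps)
  finally show "(Var 3 - C \<eta> * Var 1) * gB \<epsilon> \<eta> n \<in> ideal_gen (gens n)"
    by (rule gen_memI_neg) (simp add: gens_def)
  show "ev C (tauB \<epsilon> \<eta>) G = 0" if "G \<in> gens n" for G
    using that by (auto simp: gens_def evC tauB_def C_eps_pow[OF e] C_eps_pow[OF h])
  define pt :: "4 \<Rightarrow> complex" where "pt = (\<lambda>i. if i = 1 then 1 else if i = 2 then 2 else 0)"
  have ne: "\<epsilon> \<noteq> 0" "\<eta> \<noteq> 0" using root_nz e h n by auto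
  have t: "(2::complex) ^ n \<noteq> 1" "1 \<noteq> (2::complex) ^ n" using two_pow_ne1[OF n] by auto
  show "ev C (tauB \<epsilon> \<eta>) (gB \<epsilon> \<eta> n) \<noteq> 0"
    apply (rule nz_by_eval[of pt])
    using n ne t e h by (simp add: ev_ev[OF chom_id] gB_def evI evC tauB_def pt_def chom_id ev_geo)
qed simp

subsection \<open>Line C: x = eps y, z = eta y\<close>

definition tauC :: "complex \<Rightarrow> complex \<Rightarrow> 4 \<Rightarrow> mpoly4" where
  "tauC \<epsilon> \<eta> i = (if i = 0 then C \<epsilon> * Var 1 else if i = 2 then C \<eta> * Var 1 else Var i)"

definition gCC :: "complex \<Rightarrow> complex \<Rightarrow> nat \<Rightarrow> mpoly4" where
  "gCC \<epsilon> \<eta> n = geo \<epsilon> 0 1 n * geo \<eta> 2 1 n * (Var 2^n - Var 3^n) * (Var 0^n - Var 3^n) * Var 0 * Var 1 * Var 2"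

lemma lineC:
  assumes n: "n \<ge> 1" and e: "\<epsilon> ^ n = 1" and h: "\<eta> ^ n = 1"
  shows "{r. r * gCC \<epsilon> \<eta> n \<in> ideal_gen (gens n)} \<in> ass_primes (ideal_gen (gens n)) \<and>
         {r. r * gCC \<epsilon> \<eta> n \<in> ideal_gen (gens n)} = {r. ev C (tauC \<epsilon> \<eta>) r = 0}"
proof (rule ass_line[where la="Var 0 - C \<epsilon> * Var 1" and lb="Var 2 - C \<eta> * Var 1"])
  show "Var i - tauC \<epsilon> \<eta> i \<in> ideal_gen {Var 0 - C \<epsilon> * Var 1, Var 2 - C \<eta> * Var 1}" for i
    using ex4[of i] by (elim disjE) (simp_all add: tauC_def in_ideal_gen2)
  have "(Var 0 - C \<epsilon> * Var 1) * gCC \<epsilon> \<eta> n = ((Var 0 - C \<epsilon> * Var 1) * geo \<epsilon> 0 1 n) *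
     (geo \<eta> 2 1 n * (Var 2^n - Var 3^n) * (Var 0^n - Var 3^n) * Var 0 * Var 1 * Var 2)"
    by (simp add: gCC_def mult_ac)
  also have "\<dots> = ((Var 0^n - Var 1^n) * (Var 2^n - Var 3^n) * Var 0 * Var 1) *
      (geo \<eta> 2 1 n * (Var 0^n - Var 3^n) * Var 2)"
    unfolding geo_mult[OF e] by (simp add: mult_ac)
  finally show "(Var 0 - C \<epsilon> * Var 1) * gCC \<epsilon> \<eta> n \<in> ideal_gen (gens n)"
    by (rule gen_memI) (simp add: gens_def)
  have "(Var 2 - C \<eta> * Var 1) * gCC \<epsilon> \<eta> n = ((Var 2 - C \<eta> * Var 1) * geo \<eta> 2 1 n) *
     (geo \<epsilon> 0 1 n * (Var 2^n - Var 3^n) * (Var 0^n - Var 3^n) * Var 0 * Var 1 * Var 2)"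
    by (simp add: gCC_def mult_ac)
  also have "\<dots> = - (((Var 0^n - Var 3^n) * (Var 1^n - Var 2^n) * Var 1 * Var 2) *
      (geo \<epsilon> 0 1 n * (Var 2^n - Var 3^n) * Var 0))"
    unfolding geo_mult[OF h] by (simp add: algebra_simps)
  finally show "(Var 2 - C \<eta> * Var 1) * gCC \<epsilon> \<eta> n \<in> ideal_gen (gens n)"
    by (rule gen_memI_neg) (simp add: gens_def)
  show "ev C (tauC \<epsilon> \<eta>) G = 0" if "G \<in> gens n" for G
    using that by (auto simp: gens_def evC tauC_def C_eps_pow[OF e] C_eps_pow[OF h])
  define pt :: "4 \<Rightarrow> complex" where "pt = (\<lambda>i. if i = 1 then 1 else if i = 3 then 2 else 0)"
  have ne: "\<epsilon> \<noteq> 0" "\<eta> \<noteq> 0" using root_nz e h n by auto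
  have t: "(2::complex) ^ n \<noteq> 1" "1 \<noteq> (2::complex) ^ n" using two_pow_ne1[OF n] by auto
  show "ev C (tauC \<epsilon> \<eta>) (gCC \<epsilon> \<eta> n) \<noteq> 0"
    apply (rule nz_by_eval[of pt])
    using n ne t e h by (simp add: ev_ev[OF chom_id] gCC_def evI evC tauC_def pt_def chom_id ev_geo)
qed simp


section \<open>The plane lemma\<close>

definition Lam :: "complex \<Rightarrow> 4 \<Rightarrow> mpoly4 poly" where
  "Lam \<epsilon> i = (if i = 0 then [:0, C \<epsilon>:] else if i = 1 then [:0, 1:] else [:Var i:])"

lemma degree_Lam: "degree (Lam \<epsilon> i) \<le> 1"
  by (simp add: Lam_def)

lemma double_count:
  fixes p :: "'a::idom poly"
  assumes "p \<noteq> 0" "finite S" "\<forall>a\<in>S. 2 \<le> order a p"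
  shows "2 * card S \<le> degree p"
  using assms(2,1,3)
proof (induction S arbitrary: p rule: finite_induct)
  case empty then show ?case by simp
next
  case (insert a S)
  have "[:-a,1:]^2 dvd p" using insert by (simp add: order_divides)
  then obtain q where pq: "p = [:-a,1:]^2 * q" by (auto simp: dvd_def)
  have q0: "q \<noteq> 0" using pq insert.prems by auto
  have ordq: "\<forall>b\<in>S. 2 \<le> order b q"
  proof
    fix b assume b: "b \<in> S"
    then have ba: "b \<noteq> a" using insert.hyps by auto
    have pb: "poly ([:-a,1:]^2) b \<noteq> 0" using ba by simp
    have o0: "order b ([:-a,1:]^2) = 0" using order_root[of "[:-a,1:]^2" b] pb by blast
    have "order b p = order b ([:-a,1:]^2) + order b q"
      unfolding pq by (rule order_mult) (use pq insert.prems in simp)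
    then show "2 \<le> order b q" using o0 insert.prems b by auto
  qed
  have "2 * card S \<le> degree q" using insert.IH[OF q0 ordq] .
  moreover have "degree p = 2 + degree q"
    unfolding pq by (subst degree_mult_eq) (use q0 in \<open>simp_all add: degree_linear_power\<close>)
  ultimately show ?case using insert.hyps by simp
qed

lemma C_root_pow: "\<eta> ^ n = 1 \<Longrightarrow> C \<eta> ^ n = 1"
  by (simp add: C_pow[symmetric])

lemma C_inv_root_pow: "\<eta> ^ n = 1 \<Longrightarrow> C (inverse \<eta>) ^ n = 1"
  by (simp add: C_pow[symmetric] power_inverse)

lemma C_inv_C: "\<eta> \<noteq> 0 \<Longrightarrow> C (inverse \<eta>) * C \<eta> = 1"
  by (simp add: C_mult[symmetric])

lemma rootA:
  assumes n: "n \<ge> 1" and f: "f \<in> symbolic_power (ideal_gen (gens n)) 2"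
    and nz: "ev PC (Lam \<epsilon>) f \<noteq> 0"
  shows "2 \<le> order 0 (ev PC (Lam \<epsilon>) f)"
proof (rule root_order[OF refl f conjunct1[OF lineA[OF n]] conjunct2[OF lineA[OF n]], where \<rho>=Var])
  show "ev C (\<lambda>i. poly (Lam \<epsilon> i) 0) G = 0" if "G \<in> gens n" for G
    using that n by (auto simp: gens_def evC Lam_def power_0_left)
  show "ev C Var (poly (Lam \<epsilon> i) 0) = tauA i" for i
    using ex4[of i] by (elim disjE) (simp_all add: ev_id Lam_def tauA_def)
qed (rule nz)

lemma rootB:
  assumes n: "n \<ge> 1" and e: "\<epsilon> ^ n = 1" and h: "\<eta> ^ n = 1"
    and f: "f \<in> symbolic_power (ideal_gen (gens n)) 2"
    and nz: "ev PC (Lam \<epsilon>) f \<noteq> 0"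
  shows "2 \<le> order (C (inverse \<eta>) * Var 3) (ev PC (Lam \<epsilon>) f)"
proof (rule root_order[OF refl f conjunct1[OF lineB[OF n e h]] conjunct2[OF lineB[OF n e h]],
       where \<rho>="\<lambda>i. if i = 3 then C \<eta> * Var 1 else Var i"])
  have ne: "\<eta> \<noteq> 0" using root_nz h n by auto
  show "ev C (\<lambda>i. poly (Lam \<epsilon> i) (C (inverse \<eta>) * Var 3)) G = 0" if "G \<in> gens n" for G
    using that n by (auto simp: gens_def evC Lam_def power_mult_distrib C_root_pow[OF e] C_inv_root_pow[OF h])
  show "ev C (\<lambda>i. if i = 3 then C \<eta> * Var 1 else Var i) (poly (Lam \<epsilon> i) (C (inverse \<eta>) * Var 3)) = tauB \<epsilon> \<eta> i" for i
    using ex4[of i] ne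
    by (elim disjE) (simp_all add: evC Lam_def tauB_def mult.assoc[symmetric] C_inv_C)
qed (rule nz)

lemma rootC:
  assumes n: "n \<ge> 1" and e: "\<epsilon> ^ n = 1" and h: "\<eta> ^ n = 1"
    and f: "f \<in> symbolic_power (ideal_gen (gens n)) 2"
    and nz: "ev PC (Lam \<epsilon>) f \<noteq> 0"
  shows "2 \<le> order (C (inverse \<eta>) * Var 2) (ev PC (Lam \<epsilon>) f)"
proof (rule root_order[OF refl f conjunct1[OF lineC[OF n e h]] conjunct2[OF lineC[OF n e h]],
       where \<rho>="\<lambda>i. if i = 2 then C \<eta> * Var 1 else Var i"])
  have ne: "\<eta> \<noteq> 0" using root_nz h n by auto
  show "ev C (\<lambda>i. poly (Lam \<epsilon> i) (C (inverse \<eta>) * Var 2)) G = 0" if "G \<in> gens n" for G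
    using that n by (auto simp: gens_def evC Lam_def power_mult_distrib C_root_pow[OF e] C_inv_root_pow[OF h])
  show "ev C (\<lambda>i. if i = 2 then C \<eta> * Var 1 else Var i) (poly (Lam \<epsilon> i) (C (inverse \<eta>) * Var 2)) = tauC \<epsilon> \<eta> i" for i
    using ex4[of i] ne
    by (elim disjE) (simp_all add: evC Lam_def tauC_def mult.assoc[symmetric] C_inv_C)
qed (rule nz)


lemma lk_CVar: "Poly_Mapping.lookup (C a * Var i) (Poly_Mapping.single j 1) = (if i = j then a else 0)"
proof -
  have "C a * Var i = Poly_Mapping.single (Poly_Mapping.single i 1) a"
    by (simp add: C_def Var_def mult_single)
  moreover have "Poly_Mapping.single i (1::nat) = Poly_Mapping.single j 1 \<longleftrightarrow> i = j"
    by (metis lookup_single_eq lookup_single_not_eq zero_neq_one)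
  ultimately show ?thesis by (simp add: lookup_single when_def)
qed

lemma CVar_eq: "C a * Var i = C b * Var j \<Longrightarrow> a = (if i = j then b else 0)"
  using lk_CVar[of a i i] lk_CVar[of b j i] by (metis)

lemma plane_lemma:
  assumes n: "n \<ge> 1" and e: "\<epsilon> ^ n = 1"
    and f: "f \<in> symbolic_power (ideal_gen (gens n)) 2"
    and deg: "degree (ev PC (Lam \<epsilon>) f) \<le> 4 * n + 1"
  shows "ev PC (Lam \<epsilon>) f = 0"
proof (rule ccontr)
  assume nz: "ev PC (Lam \<epsilon>) f \<noteq> 0"
  define U where "U = {\<eta>::complex. \<eta> ^ n = 1}"
  have finU: "finite U" and cardU: "card U = n"
    using n card_roots_unity_eq[of n] finite_nth_roots[of n 1] by (auto simp: U_def)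
  have U0: "\<eta> \<noteq> 0" if "\<eta> \<in> U" for \<eta> using that root_nz n by (auto simp: U_def)
  define SB where "SB = (\<lambda>\<eta>. C (inverse \<eta>) * Var 3) ` U"
  define SC where "SC = (\<lambda>\<eta>. C (inverse \<eta>) * Var 2) ` U"
  define S where "S = insert 0 (SB \<union> SC)"
  have injB: "inj_on (\<lambda>\<eta>. C (inverse \<eta>) * Var 3) U"
    by (rule inj_onI) (use CVar_eq in fastforce)
  have injC: "inj_on (\<lambda>\<eta>. C (inverse \<eta>) * Var 2) U"
    by (rule inj_onI) (use CVar_eq in fastforce)
  have cB: "card SB = n" using injB cardU by (simp add: SB_def card_image)
  have cC: "card SC = n" using injC cardU by (simp add: SC_def card_image)
  have disj: "SB \<inter> SC = {}"
    using CVar_eq U0 by (fastforce simp: SB_def SC_def)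
  have n0: "0 \<notin> SB \<union> SC"
  proof
    assume "0 \<in> SB \<union> SC"
    then obtain \<eta> i where "\<eta> \<in> U" "C (inverse \<eta>) * Var i = 0 * Var i"
      by (auto simp: SB_def SC_def)
    then show False using CVar_eq[of "inverse \<eta>" i 0 i] U0 by (simp add: C_def)
  qed
  have finS: "finite S" using finU by (simp add: S_def SB_def SC_def)
  have cardS: "card S = 2 * n + 1"
    using n0 disj cB cC finU by (simp add: S_def card_Un_disjoint SB_def SC_def)
  have ord: "\<forall>a\<in>S. 2 \<le> order a (ev PC (Lam \<epsilon>) f)"
    using rootA[OF n f nz] rootB[OF n e _ f nz] rootC[OF n e _ f nz]
    by (auto simp: S_def SB_def SC_def U_def)
  have "2 * card S \<le> degree (ev PC (Lam \<epsilon>) f)" by (rule double_count[OF nz finS ord])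
  then show False using deg cardS by simp
qed


definition sw :: "4 \<Rightarrow> 4 \<Rightarrow> 4 \<Rightarrow> 4" where
  "sw a b i = (if i = a then b else if i = b then a else i)"

lemma pm_mem: "G \<in> gens n \<Longrightarrow> h = G \<or> h = - G \<Longrightarrow> h \<in> ideal_gen (gens n)"
  using gen_in ideal_uminus[OF ideal_gen_ideal gen_in] by blast

lemma gens_cases:
  assumes "G \<in> gens n"
    and "P ((Var 0^n - Var 1^n) * (Var 2^n - Var 3^n) * Var 0 * Var 1)"
    and "P ((Var 0^n - Var 1^n) * (Var 2^n - Var 3^n) * Var 2 * Var 3)"
    and "P ((Var 0^n - Var 2^n) * (Var 1^n - Var 3^n) * Var 0 * Var 2)"
    and "P ((Var 0^n - Var 2^n) * (Var 1^n - Var 3^n) * Var 1 * Var 3)"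
    and "P ((Var 0^n - Var 3^n) * (Var 1^n - Var 2^n) * Var 0 * Var 3)"
    and "P ((Var 0^n - Var 3^n) * (Var 1^n - Var 2^n) * Var 1 * Var 2)"
  shows "P G"
  using assms by (auto simp: gens_def)

lemma sw12_gens: "G \<in> gens n \<Longrightarrow> ev C (\<lambda>i. Var (sw 1 2 i)) G \<in> ideal_gen (gens n)"
  apply (erule gens_cases[where P="\<lambda>G. ev C (\<lambda>i. Var (sw 1 2 i)) G \<in> ideal_gen (gens n)"])
  apply (rule pm_mem[where G="(Var 0^n - Var 2^n) * (Var 1^n - Var 3^n) * Var 0 * Var 2"], simp add: gens_def, simp add: evC sw_def algebra_simps)
  apply (rule pm_mem[where G="(Var 0^n - Var 2^n) * (Var 1^n - Var 3^n) * Var 1 * Var 3"], simp add: gens_def, simp add: evC sw_def algebra_simps)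
  apply (rule pm_mem[where G="(Var 0^n - Var 1^n) * (Var 2^n - Var 3^n) * Var 0 * Var 1"], simp add: gens_def, simp add: evC sw_def algebra_simps)
  apply (rule pm_mem[where G="(Var 0^n - Var 1^n) * (Var 2^n - Var 3^n) * Var 2 * Var 3"], simp add: gens_def, simp add: evC sw_def algebra_simps)
  apply (rule pm_mem[where G="(Var 0^n - Var 3^n) * (Var 1^n - Var 2^n) * Var 0 * Var 3"], simp add: gens_def, simp add: evC sw_def algebra_simps)
  apply (rule pm_mem[where G="(Var 0^n - Var 3^n) * (Var 1^n - Var 2^n) * Var 1 * Var 2"], simp add: gens_def, simp add: evC sw_def algebra_simps)
  done

lemma sw13_gens: "G \<in> gens n \<Longrightarrow> ev C (\<lambda>i. Var (sw 1 3 i)) G \<in> ideal_gen (gens n)"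
  apply (erule gens_cases[where P="\<lambda>G. ev C (\<lambda>i. Var (sw 1 3 i)) G \<in> ideal_gen (gens n)"])
  apply (rule pm_mem[where G="(Var 0^n - Var 3^n) * (Var 1^n - Var 2^n) * Var 0 * Var 3"], simp add: gens_def, simp add: evC sw_def algebra_simps)
  apply (rule pm_mem[where G="(Var 0^n - Var 3^n) * (Var 1^n - Var 2^n) * Var 1 * Var 2"], simp add: gens_def, simp add: evC sw_def algebra_simps)
  apply (rule pm_mem[where G="(Var 0^n - Var 2^n) * (Var 1^n - Var 3^n) * Var 0 * Var 2"], simp add: gens_def, simp add: evC sw_def algebra_simps)
  apply (rule pm_mem[where G="(Var 0^n - Var 2^n) * (Var 1^n - Var 3^n) * Var 1 * Var 3"], simp add: gens_def, simp add: evC sw_def algebra_simps)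
  apply (rule pm_mem[where G="(Var 0^n - Var 1^n) * (Var 2^n - Var 3^n) * Var 0 * Var 1"], simp add: gens_def, simp add: evC sw_def algebra_simps)
  apply (rule pm_mem[where G="(Var 0^n - Var 1^n) * (Var 2^n - Var 3^n) * Var 2 * Var 3"], simp add: gens_def, simp add: evC sw_def algebra_simps)
  done

lemma sw02_gens: "G \<in> gens n \<Longrightarrow> ev C (\<lambda>i. Var (sw 0 2 i)) G \<in> ideal_gen (gens n)"
  apply (erule gens_cases[where P="\<lambda>G. ev C (\<lambda>i. Var (sw 0 2 i)) G \<in> ideal_gen (gens n)"])
  apply (rule pm_mem[where G="(Var 0^n - Var 3^n) * (Var 1^n - Var 2^n) * Var 1 * Var 2"], simp add: gens_def, simp add: evC sw_def algebra_simps)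
  apply (rule pm_mem[where G="(Var 0^n - Var 3^n) * (Var 1^n - Var 2^n) * Var 0 * Var 3"], simp add: gens_def, simp add: evC sw_def algebra_simps)
  apply (rule pm_mem[where G="(Var 0^n - Var 2^n) * (Var 1^n - Var 3^n) * Var 0 * Var 2"], simp add: gens_def, simp add: evC sw_def algebra_simps)
  apply (rule pm_mem[where G="(Var 0^n - Var 2^n) * (Var 1^n - Var 3^n) * Var 1 * Var 3"], simp add: gens_def, simp add: evC sw_def algebra_simps)
  apply (rule pm_mem[where G="(Var 0^n - Var 1^n) * (Var 2^n - Var 3^n) * Var 2 * Var 3"], simp add: gens_def, simp add: evC sw_def algebra_simps)
  apply (rule pm_mem[where G="(Var 0^n - Var 1^n) * (Var 2^n - Var 3^n) * Var 0 * Var 1"], simp add: gens_def, simp add: evC sw_def algebra_simps)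
  done

lemma sw03_gens: "G \<in> gens n \<Longrightarrow> ev C (\<lambda>i. Var (sw 0 3 i)) G \<in> ideal_gen (gens n)"
  apply (erule gens_cases[where P="\<lambda>G. ev C (\<lambda>i. Var (sw 0 3 i)) G \<in> ideal_gen (gens n)"])
  apply (rule pm_mem[where G="(Var 0^n - Var 2^n) * (Var 1^n - Var 3^n) * Var 1 * Var 3"], simp add: gens_def, simp add: evC sw_def algebra_simps)
  apply (rule pm_mem[where G="(Var 0^n - Var 2^n) * (Var 1^n - Var 3^n) * Var 0 * Var 2"], simp add: gens_def, simp add: evC sw_def algebra_simps)
  apply (rule pm_mem[where G="(Var 0^n - Var 1^n) * (Var 2^n - Var 3^n) * Var 2 * Var 3"], simp add: gens_def, simp add: evC sw_def algebra_simps)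
  apply (rule pm_mem[where G="(Var 0^n - Var 1^n) * (Var 2^n - Var 3^n) * Var 0 * Var 1"], simp add: gens_def, simp add: evC sw_def algebra_simps)
  apply (rule pm_mem[where G="(Var 0^n - Var 3^n) * (Var 1^n - Var 2^n) * Var 0 * Var 3"], simp add: gens_def, simp add: evC sw_def algebra_simps)
  apply (rule pm_mem[where G="(Var 0^n - Var 3^n) * (Var 1^n - Var 2^n) * Var 1 * Var 2"], simp add: gens_def, simp add: evC sw_def algebra_simps)
  done


definition plane :: "4 \<Rightarrow> 4 \<Rightarrow> complex \<Rightarrow> 4 \<Rightarrow> mpoly4" where
  "plane i j \<epsilon> m = (if m = i then C \<epsilon> * Var j else Var m)"

lemma plane_general:
  assumes n: "n \<ge> 1" and e: "\<epsilon> ^ n = 1"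
    and f: "f \<in> symbolic_power (ideal_gen (gens n)) 2"
    and hom: "homogeneous d f" and d: "d \<le> 4 * n + 1"
    and p: "\<And>i. p (p i) = i"
    and pg: "\<And>G. G \<in> gens n \<Longrightarrow> ev C (\<lambda>i. Var (p i)) G \<in> ideal_gen (gens n)"
  shows "ev C (plane (p 0) (p 1) \<epsilon>) f = 0"
proof -
  let ?\<pi> = "ev C (\<lambda>i. Var (p i))"
  have inv: "?\<pi> (?\<pi> h) = h" for h
    by (simp add: ev_ev[OF chom_C] chom_C p ev_id)
  have f': "?\<pi> f \<in> symbolic_power (ideal_gen (gens n)) 2"
    by (rule sym_transport[OF refl inv pg f])
  have comp: "ev PC (Lam \<epsilon>) (?\<pi> f) = ev PC (\<lambda>m. Lam \<epsilon> (p m)) f"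
    by (simp add: ev_ev[OF chom_PC] chom_PC)
  have "degree (ev PC (\<lambda>m. Lam \<epsilon> (p m)) f) \<le> d"
    by (rule degree_ev_le) (use degree_Lam hom in \<open>auto simp: homogeneous_def\<close>)
  then have deg: "degree (ev PC (Lam \<epsilon>) (?\<pi> f)) \<le> 4 * n + 1" using comp d by simp
  have z: "ev PC (Lam \<epsilon>) (?\<pi> f) = 0" by (rule plane_lemma[OF n e f' deg])
  define \<theta> where "\<theta> = (\<lambda>i. poly (Lam \<epsilon> i) (Var 1))"
  have pe: "poly (ev PC (Lam \<epsilon>) h) (Var 1) = ev C \<theta> h" for h
    using poly_ev[OF chom_PC, of "Lam \<epsilon>" h "Var 1"] by (simp add: PC_def \<theta>_def)
  have z2: "ev C \<theta> (?\<pi> f) = 0" using z pe[of "?\<pi> f"] by simp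
  have "?\<pi> (ev C \<theta> (?\<pi> f)) = ev C (\<lambda>m. ?\<pi> (\<theta> (p m))) f"
    by (simp add: ev_ev[OF chom_C] chom_C)
  also have "(\<lambda>m. ?\<pi> (\<theta> (p m))) = plane (p 0) (p 1) \<epsilon>"
  proof
    fix m
    show "?\<pi> (\<theta> (p m)) = plane (p 0) (p 1) \<epsilon> m"
    proof (cases "m = p 0")
      case True
      then have "p m = 0" using p by metis
      then show ?thesis using True by (simp add: \<theta>_def Lam_def plane_def evC mult.commute)
    next
      case False
      then have "p m \<noteq> 0" using p by metis
      then show ?thesis using False ex4[of "p m"] p[of m]
        by (auto simp: \<theta>_def Lam_def plane_def evC)
    qed
  qed
  finally show ?thesis using z2 by simp
qed

lemma sw_invol: "sw a b (sw a b i) = i"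
  by (simp add: sw_def)

lemma all_planes:
  assumes n: "n \<ge> 1" and e: "\<epsilon> ^ n = 1"
    and f: "f \<in> symbolic_power (ideal_gen (gens n)) 2"
    and hom: "homogeneous d f" and d: "d \<le> 4 * n + 1"
  shows "ev C (plane 0 1 \<epsilon>) f = 0" "ev C (plane 0 2 \<epsilon>) f = 0" "ev C (plane 0 3 \<epsilon>) f = 0"
        "ev C (plane 2 1 \<epsilon>) f = 0" "ev C (plane 3 1 \<epsilon>) f = 0"
proof -
  show "ev C (plane 0 1 \<epsilon>) f = 0"
    using plane_general[OF n e f hom d, of "\<lambda>i. i"] by (simp add: ev_id gen_in)
  show "ev C (plane 0 2 \<epsilon>) f = 0"
    using plane_general[OF n e f hom d, of "sw 1 2"] by (simp add: sw_invol sw12_gens) (simp add: sw_def)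
  show "ev C (plane 0 3 \<epsilon>) f = 0"
    using plane_general[OF n e f hom d, of "sw 1 3"] by (simp add: sw_invol sw13_gens) (simp add: sw_def)
  show "ev C (plane 2 1 \<epsilon>) f = 0"
    using plane_general[OF n e f hom d, of "sw 0 2"] by (simp add: sw_invol sw02_gens) (simp add: sw_def)
  show "ev C (plane 3 1 \<epsilon>) f = 0"
    using plane_general[OF n e f hom d, of "sw 0 3"] by (simp add: sw_invol sw03_gens) (simp add: sw_def)
qed


section \<open>Final count on a generic line\<close>

definition cc :: "4 \<Rightarrow> complex" where
  "cc k = (if k = 0 then 1 else if k = 1 then 2 else if k = 2 then 3 else 4)"

definition chi :: "4 \<Rightarrow> mpoly4 poly" where "chi k = [:Var k, C (cc k):]"

definition PL :: "(4 \<times> 4) set" where "PL = {(0,1),(0,2),(0,3),(2,1),(3,1)}"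

definition Rt :: "4 \<Rightarrow> 4 \<Rightarrow> complex \<Rightarrow> mpoly4" where
  "Rt i j \<epsilon> = C (inverse (cc i - \<epsilon> * cc j)) * (C \<epsilon> * Var j - Var i)"

lemma cc_ne:
  assumes "(i, j) \<in> PL" "norm \<epsilon> = 1"
  shows "cc i - \<epsilon> * cc j \<noteq> 0"
proof
  assume "cc i - \<epsilon> * cc j = 0"
  then have "cc i = \<epsilon> * cc j" by simp
  then have "norm (cc i) = norm (cc j)" using assms(2) by (simp add: norm_mult)
  then show False using assms(1) by (auto simp: PL_def cc_def)
qed

lemma root_norm: "\<epsilon> ^ n = 1 \<Longrightarrow> n \<ge> 1 \<Longrightarrow> norm (\<epsilon>::complex) = 1"
  using power_eq_1_iff[of \<epsilon> n] by auto

lemma root_R: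
  assumes ij: "(i, j) \<in> PL" and e: "norm \<epsilon> = 1" and pz: "ev C (plane i j \<epsilon>) f = 0"
  shows "poly (ev PC chi f) (Rt i j \<epsilon>) = 0"
proof -
  define r where "r = Rt i j \<epsilon>"
  define \<delta> where "\<delta> = cc i - \<epsilon> * cc j"
  have \<delta>0: "\<delta> \<noteq> 0" using cc_ne[OF ij e] by (simp add: \<delta>_def)
  define \<nu> where "\<nu> = (\<lambda>k. Var k + r * C (cc k))"
  have pe: "poly (ev PC chi f) r = ev C \<nu> f"
    using poly_ev[OF chom_PC, of chi f r] by (simp add: PC_def \<nu>_def chi_def)
  have rd: "r * C \<delta> = C \<epsilon> * Var j - Var i"
    unfolding r_def Rt_def \<delta>_def[symmetric] using \<delta>0
    by (simp add: mult.commute mult.left_commute C_mult[symmetric])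
  have cci: "C (cc i) = C \<delta> + C \<epsilon> * C (cc j)"
    by (simp add: \<delta>_def C_add[symmetric] C_mult[symmetric])
  have key: "(\<lambda>m. ev C \<nu> (plane i j \<epsilon> m)) = \<nu>"
  proof
    fix m
    show "ev C \<nu> (plane i j \<epsilon> m) = \<nu> m"
    proof (cases "m = i")
      case True
      have "C \<epsilon> * (Var j + r * C (cc j)) = Var i + r * C (cc i)"
        unfolding cci using rd by algebra
      then show ?thesis using True by (simp add: plane_def evC \<nu>_def)
    next
      case False then show ?thesis by (simp add: plane_def evC)
    qed
  qed
  have "ev C \<nu> f = ev C \<nu> (ev C (plane i j \<epsilon>) f)"
    by (simp add: ev_ev[OF chom_C] chom_C key)
  then show ?thesis using pe pz by (simp add: r_def)
qed

lemma Rt_lk: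
  "Poly_Mapping.lookup (Rt i j \<epsilon>) (Poly_Mapping.single k 1) =
    (if j = k then inverse (cc i - \<epsilon> * cc j) * \<epsilon> else 0) - (if i = k then inverse (cc i - \<epsilon> * cc j) else 0)"
proof -
  have eq: "Rt i j \<epsilon> = C (inverse (cc i - \<epsilon> * cc j) * \<epsilon>) * Var j - C (inverse (cc i - \<epsilon> * cc j)) * Var i"
    by (simp add: Rt_def C_mult algebra_simps)
  show ?thesis unfolding eq lookup_minus lk_CVar by simp
qed

lemma Rt_inj:
  assumes "(i, j) \<in> PL" "(i', j') \<in> PL" "norm \<epsilon> = 1" "norm \<epsilon>' = 1"
    and eq: "Rt i j \<epsilon> = Rt i' j' \<epsilon>'"
  shows "i = i' \<and> j = j' \<and> \<epsilon> = \<epsilon>'"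
proof -
  have ne: "\<epsilon> \<noteq> 0" "\<epsilon>' \<noteq> 0" using assms(3,4) by auto
  have d: "cc i - \<epsilon> * cc j \<noteq> 0" "cc i' - \<epsilon>' * cc j' \<noteq> 0" using cc_ne assms by auto
  have lk: "\<And>k. Poly_Mapping.lookup (Rt i j \<epsilon>) (Poly_Mapping.single k 1) =
                 Poly_Mapping.lookup (Rt i' j' \<epsilon>') (Poly_Mapping.single k 1)"
    using eq by simp
  note l0 = lk[of 0] and l1 = lk[of 1] and l2 = lk[of 2] and l3 = lk[of 3]
  show ?thesis
    using assms(1,2) l0 l1 l2 l3 ne d unfolding Rt_lk
    by (auto simp: PL_def cc_def)
qed


lemma final_count:
  assumes n: "n \<ge> 2" and f0: "f \<noteq> 0" and hom: "homogeneous d f" and d: "d \<le> 4 * n + 1"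
    and planes: "\<And>\<epsilon> i j. \<epsilon> ^ n = 1 \<Longrightarrow> (i, j) \<in> PL \<Longrightarrow> ev C (plane i j \<epsilon>) f = 0"
  shows False
proof -
  let ?p = "ev PC chi f"
  have "poly ?p 0 = ev C (\<lambda>k. poly (chi k) 0) f"
    using poly_ev[OF chom_PC, of chi f 0] by (simp add: PC_def)
  also have "(\<lambda>k. poly (chi k) 0) = Var" by (simp add: chi_def)
  finally have "poly ?p 0 = f" by (simp add: ev_id)
  then have p0: "?p \<noteq> 0" using f0 by auto
  have deg: "degree ?p \<le> d"
    by (rule degree_ev_le) (use hom in \<open>auto simp: chi_def homogeneous_def\<close>)
  define U where "U = {\<eta>::complex. \<eta> ^ n = 1}"
  have finU: "finite U" and cardU: "card U = n"
    using n card_roots_unity_eq[of n] finite_nth_roots[of n 1] by (auto simp: U_def)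
  have normU: "norm \<eta> = 1" if "\<eta> \<in> U" for \<eta> using that root_norm n by (auto simp: U_def)
  define D where "D = PL \<times> U"
  define R where "R = (\<lambda>((i, j), \<epsilon>). Rt i j \<epsilon>)"
  have cPL: "card PL = 5" by (simp add: PL_def)
  have finPL: "finite PL" by (simp add: PL_def)
  have cD: "card D = 5 * n" using cPL cardU by (simp add: D_def card_cartesian_product)
  have inj: "inj_on R D"
  proof (rule inj_onI)
    fix a b assume a: "a \<in> D" and b: "b \<in> D" and eq: "R a = R b"
    obtain i j \<epsilon> where ai: "a = ((i, j), \<epsilon>)" by (metis prod.collapse)
    obtain i' j' \<epsilon>' where bi: "b = ((i', j'), \<epsilon>')" by (metis prod.collapse)
    show "a = b"
      using Rt_inj[of i j i' j' \<epsilon> \<epsilon>'] a b eq normU unfolding ai bi D_def R_def by auto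
  qed
  have sub: "R ` D \<subseteq> {x. poly ?p x = 0}"
  proof
    fix x assume "x \<in> R ` D"
    then obtain i j \<epsilon> where ij: "(i, j) \<in> PL" and e: "\<epsilon> \<in> U" and x: "x = Rt i j \<epsilon>"
      by (auto simp: D_def R_def)
    show "x \<in> {x. poly ?p x = 0}"
      using root_R[OF ij normU[OF e] planes[of \<epsilon> i j]] e ij x by (simp add: U_def)
  qed
  have cR: "card (R ` D) = 5 * n" using card_image[OF inj] cD by simp
  have "card (R ` D) \<le> card {x. poly ?p x = 0}" 
    using card_mono[OF poly_roots_finite[OF p0] sub] card_image[OF inj] cD by simp
  also have "\<dots> \<le> degree ?p" by (rule card_poly_roots_bound[OF p0])
  finally show False using deg d n cR by simp
qed

lemma hom_mult:
  assumes "homogeneous a f" "homogeneous b g"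
  shows "homogeneous (a + b) (f * g)"
  unfolding homogeneous_def
proof
  fix k assume "k \<in> Poly_Mapping.keys (f * g)"
  then obtain u v where "u \<in> Poly_Mapping.keys f" "v \<in> Poly_Mapping.keys g" "k = u + v"
    using keys_mult by blast
  then show "(\<Sum>i\<in>UNIV. Poly_Mapping.lookup k i) = a + b"
    using assms by (simp add: homogeneous_def lookup_add sum.distrib)
qed

lemma hom_diff:
  assumes "homogeneous d f" "homogeneous d g"
  shows "homogeneous d (f - g)"
  using assms keys_diff[of f g] unfolding homogeneous_def by blast

lemma hom_one: "homogeneous 0 1"
  by (simp add: homogeneous_def)

lemma hom_pow: "homogeneous d f \<Longrightarrow> homogeneous (k * d) (f ^ k)"
  by (induction k) (simp_all add: hom_one hom_mult)

lemma hom_Var: "homogeneous 1 (Var i)"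
proof -
  have "(\<Sum>j\<in>UNIV. Poly_Mapping.lookup (Poly_Mapping.single i (1::nat)) j) = (\<Sum>j\<in>UNIV. if i = j then 1 else 0)"
    by (rule sum.cong) (auto simp: lookup_single when_def)
  then show ?thesis by (simp add: homogeneous_def Var_def)
qed


lemma lower_bound_aux:
  assumes n: "n \<ge> 3" and f: "f \<in> symbolic_power (ideal_gen (gens n)) 2"
    and f0: "f \<noteq> 0" and hom: "homogeneous d f" and d: "d \<le> 4 * n + 1"
  shows False
proof (rule final_count[of n f d])
  have n1: "n \<ge> 1" using n by simp
  fix \<epsilon> :: complex and i j :: 4
  assume e: "\<epsilon> ^ n = 1" and ij: "(i, j) \<in> PL"
  note ap = all_planes[OF n1 e f hom d]
  show "ev C (plane i j \<epsilon>) f = 0" using ij ap by (auto simp: PL_def)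
qed (use n f0 hom d in auto)

theorem proposition3p5:
  fixes n :: nat
  assumes "n \<ge> 3"
  defines "x \<equiv> Var 0" and "y \<equiv> Var 1" and "z \<equiv> Var 2" and "w \<equiv> Var 3"
  defines "I \<equiv> ideal_gen
     {(x^n - y^n) * (z^n - w^n) * x * y, (x^n - y^n) * (z^n - w^n) * z * w,
      (x^n - z^n) * (y^n - w^n) * x * z, (x^n - z^n) * (y^n - w^n) * y * w,
      (x^n - w^n) * (y^n - z^n) * x * w, (x^n - w^n) * (y^n - z^n) * y * z}"
  shows "4 * n + 2 \<le> alpha (symbolic_power I 2) \<and> alpha (symbolic_power I 2) \<le> 4 * n + 4"
proof -
  have I_eq: "I = ideal_gen (gens n)" by (simp add: I_def x_def y_def z_def w_def gens_def)
  define G where "G = (Var 0^n - Var 1^n) * (Var 2^n - Var 3^n) * Var 0 * Var 1"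
  have GI: "G \<in> I" unfolding I_eq G_def by (rule gen_in) (simp add: gens_def)
  have sq: "G * G \<in> symbolic_power I 2"
    unfolding symbolic_power_def
  proof safe
    fix P assume "P \<in> ass_primes I"
    then have "1 \<notin> P" by (simp add: ass_primes_def prime_ideal_def)
    moreover have "1 * (G * G) \<in> ideal_pow I 2" using mult_in_pow2[OF GI GI] by simp
    ultimately show "\<exists>s. s \<notin> P \<and> s * (G * G) \<in> ideal_pow I 2" by blast
  qed
  have hG: "homogeneous (2 * n + 2) G"
  proof -
    have "homogeneous (n * 1) (Var i ^ n)" for i by (rule hom_pow[OF hom_Var])
    then have hp: "homogeneous n (Var i ^ n)" for i by simp
    have "homogeneous (n + n + 1 + 1) G"
      unfolding G_def by (intro hom_mult hom_diff hp hom_Var)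
    moreover have "n + n + 1 + 1 = 2 * n + 2" by simp
    ultimately show ?thesis by metis
  qed
  have hGG: "homogeneous (4 * n + 4) (G * G)"
    using hom_mult[OF hG hG] by (metis add_2_eq_Suc' mult_2 add.assoc add.commute add_mult_distrib numeral_Bit0)
  define pt :: "4 \<Rightarrow> complex" where "pt = (\<lambda>i. if i = 0 \<or> i = 2 then 2 else 1)"
  have t: "(2::complex) ^ n \<noteq> 1" using two_pow_ne1 assms(1) by simp
  have "ev (\<lambda>c. c) pt G \<noteq> 0" using t by (simp add: G_def evI chom_id pt_def)
  then have G0: "G \<noteq> 0" by auto
  then have GG0: "G * G \<noteq> 0" by simp
  have ex: "\<exists>f\<in>symbolic_power I 2. f \<noteq> 0 \<and> homogeneous (4 * n + 4) f"
    using sq GG0 hGG by blast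
  have up: "alpha (symbolic_power I 2) \<le> 4 * n + 4"
    unfolding alpha_def by (rule Least_le) (rule ex)
  have "\<exists>f\<in>symbolic_power I 2. f \<noteq> 0 \<and> homogeneous (alpha (symbolic_power I 2)) f"
    unfolding alpha_def by (rule LeastI_ex) (use ex in blast)
  then obtain f where f: "f \<in> symbolic_power I 2" "f \<noteq> 0"
    and hf: "homogeneous (alpha (symbolic_power I 2)) f" by blast
  have low: "4 * n + 2 \<le> alpha (symbolic_power I 2)"
  proof (rule ccontr)
    assume "\<not> 4 * n + 2 \<le> alpha (symbolic_power I 2)"
    then have "alpha (symbolic_power I 2) \<le> 4 * n + 1" by simp
    then show False using lower_bound_aux[OF assms(1) _ f(2) hf] f(1) I_eq by simp
  qed
  show ?thesis using low up by simp
qed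

end
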